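(* For the biased random transpositions walk with parameter $0<a\le 1$, and every $\varepsilon\in(0,1)$, setting $t_N=\lfloor (1-\varepsilon)\frac{1}{2a}N\log N\rfloor$, $$\lim_{N\to\infty}\ \frac12\sum_{\sigma\in S_N}\Big|P^{t_N}(\sigma)-\frac{1}{N!}\Big| = 1 .$$ More precisely, with $K=(N)^{\varepsilon/2}$ and $A_K$ the set of arrangements in which at least $K$ of the $a$-cards are in their original positions, $P^{t_N}(A_K)\to 1$ while $U(A_K)\to 0$, where $U$ is the uniform distribution on $S_N$.
   Context: Biased random transpositions walk: there are $N=2n$ cards. A fixed set of $n$ of them are called $a$-cards and have weight $p(c)=a$; the other $n$ are $b$-cards and have weight $p(c)=b$, where $0<a\le 1$ and $b=2-a$. At each step $t=1,2,\dots$ two cards $R_t$ and $L_t$ are chosen independently, each equal to a given card $c$ with probability $p(c)/N$, and the positions of $R_t$ and $L_t$ are exchanged (nothing happens if $R_t=L_t$). Starting from the identity arrangement, $P^t$ denotes the distribution on $S_N$ of the arrangement after $t$ steps. *)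

theory Defs
  imports "HOL-Probability.Probability" "HOL-Combinatorics.Combinatorics"
begin

text \<open>Cards are 0..<2n (N = 2n). Cards 0..<n are the a-cards, cards n..<2n the b-cards.
  An arrangement is a permutation sigma of {0..<2n}; sigma c is the position of card c.\<close>

definition weight :: "nat \<Rightarrow> real \<Rightarrow> nat \<Rightarrow> real" where
  "weight n a c = (if c < n then a else 2 - a)"

definition card_pmf :: "nat \<Rightarrow> real \<Rightarrow> nat pmf" where
  "card_pmf n a = embed_pmf (\<lambda>c. if c < 2 * n then weight n a c / real (2 * n) else 0)"

definition step_pmf :: "nat \<Rightarrow> real \<Rightarrow> (nat \<Rightarrow> nat) \<Rightarrow> (nat \<Rightarrow> nat) pmf" where
  "step_pmf n a \<sigma> =
     bind_pmf (card_pmf n a) (\<lambda>R. map_pmf (\<lambda>L. \<sigma> \<circ> Transposition.transpose R L) (card_pmf n a))"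

primrec walk :: "nat \<Rightarrow> real \<Rightarrow> nat \<Rightarrow> (nat \<Rightarrow> nat) pmf" where
  "walk n a 0 = return_pmf id"
| "walk n a (Suc t) = bind_pmf (walk n a t) (step_pmf n a)"

definition perms :: "nat \<Rightarrow> (nat \<Rightarrow> nat) set" where
  "perms N = {\<sigma>. \<sigma> permutes {0..<N}}"

definition tv_to_uniform :: "nat \<Rightarrow> real \<Rightarrow> nat \<Rightarrow> real" where
  "tv_to_uniform n a t =
     (1/2) * (\<Sum>\<sigma>\<in>perms (2*n). \<bar>pmf (walk n a t) \<sigma> - 1 / fact (2*n)\<bar>)"

definition tN :: "real \<Rightarrow> real \<Rightarrow> nat \<Rightarrow> nat" where
  "tN a \<epsilon> N = nat \<lfloor>(1 - \<epsilon>) * (1 / (2 * a)) * real N * ln (real N)\<rfloor>"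

definition A_set :: "nat \<Rightarrow> real \<Rightarrow> (nat \<Rightarrow> nat) set" where
  "A_set n K = {\<sigma>. real (card {c\<in>{0..<n}. \<sigma> c = c}) \<ge> K}"

end

theory Submission
  imports Defs "HOL-Real_Asymp.Real_Asymp"
begin


lemma card_pmf_ok:
  assumes "0 < a" "a \<le> 1" "1 \<le> n"
  shows "pmf (card_pmf n a) c = (if c < 2 * n then weight n a c / real (2 * n) else 0)"
  unfolding card_pmf_def
proof (rule pmf_embed_pmf)
  show "\<And>x. 0 \<le> (if x < 2 * n then weight n a x / real (2 * n) else 0)"
    using assms by (auto simp: weight_def)
  have "(\<integral>\<^sup>+x. ennreal (if x < 2 * n then weight n a x / real (2 * n) else 0) \<partial>count_space UNIV)
      = (\<integral>\<^sup>+x. ennreal (if x < 2 * n then weight n a x / real (2 * n) else 0) \<partial>count_space {..<2*n})"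
    by (subst nn_integral_count_space_indicator) (auto intro!: nn_integral_cong simp: indicator_def)
  also have "\<dots> = (\<Sum>x<2*n. ennreal (weight n a x / real (2 * n)))"
    by (subst nn_integral_count_space_finite) auto
  also have "\<dots> = ennreal (\<Sum>x<2*n. weight n a x / real (2 * n))"
    using assms by (subst sum_ennreal) (auto simp: weight_def)
  also have "(\<Sum>x<2*n. weight n a x / real (2 * n)) = 1"
  proof -
    have "(\<Sum>x<2*n. weight n a x) = (\<Sum>x<n. weight n a x) + (\<Sum>x=n..<2*n. weight n a x)"
      by (metis lessThan_atLeast0 mult_2 sum.atLeastLessThan_concat le_add1 zero_le)
    also have "\<dots> = n * a + n * (2 - a)" by (simp add: weight_def)
    finally show ?thesis using assms by (simp add: sum_divide_distrib[symmetric] field_simps)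
  qed
  finally show "(\<integral>\<^sup>+x. ennreal (if x < 2 * n then weight n a x / real (2 * n) else 0) \<partial>count_space UNIV) = 1"
    by simp
qed



definition step2 :: "nat \<Rightarrow> real \<Rightarrow> ((nat \<Rightarrow> nat) \<times> nat set) \<Rightarrow> ((nat \<Rightarrow> nat) \<times> nat set) pmf" where
  "step2 n a x = bind_pmf (card_pmf n a)
     (\<lambda>R. map_pmf (\<lambda>L. (fst x \<circ> Transposition.transpose R L, insert R (insert L (snd x)))) (card_pmf n a))"

primrec walk2 :: "nat \<Rightarrow> real \<Rightarrow> nat \<Rightarrow> ((nat \<Rightarrow> nat) \<times> nat set) pmf" where
  "walk2 n a 0 = return_pmf (id, {})"
| "walk2 n a (Suc t) = bind_pmf (walk2 n a t) (step2 n a)"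

lemma walk2_fst: "map_pmf fst (walk2 n a t) = walk n a t"
proof (induction t)
  case 0 then show ?case by simp
next
  case (Suc t)
  have "map_pmf fst (walk2 n a (Suc t)) = bind_pmf (walk2 n a t) (\<lambda>x. map_pmf fst (step2 n a x))"
    by (simp add: map_bind_pmf)
  also have "\<dots> = bind_pmf (walk2 n a t) (\<lambda>x. step_pmf n a (fst x))"
    by (simp add: step2_def step_pmf_def map_bind_pmf map_pmf_comp o_def)
  also have "\<dots> = bind_pmf (map_pmf fst (walk2 n a t)) (step_pmf n a)"
    by (simp add: bind_map_pmf)
  finally show ?case using Suc by simp
qed

lemma walk2_inv: "x \<in> set_pmf (walk2 n a t) \<Longrightarrow> c \<notin> snd x \<Longrightarrow> fst x c = c"
proof (induction t arbitrary: x)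
  case 0 then show ?case by simp
next
  case (Suc t)
  then show ?case by (auto simp: step2_def)
qed

context
  fixes n :: nat and a :: real
  assumes a0: "0 < a" and a1: "a \<le> 1" and n1: "1 \<le> n"
begin

lemma set_card_pmf: "set_pmf (card_pmf n a) \<subseteq> {..<2*n}"
  using card_pmf_ok[OF a0 a1 n1] by (auto simp: set_pmf_eq split: if_splits)

lemma finite_walk2: "finite (set_pmf (walk2 n a t))"
proof (induction t)
  case 0 then show ?case by simp
next
  case (Suc t)
  have "finite (set_pmf (card_pmf n a))" using set_card_pmf finite_subset by blast
  with Suc show ?case by (simp add: step2_def)
qed

lemma walk_perm: "\<sigma> \<in> set_pmf (walk n a t) \<Longrightarrow> \<sigma> permutes {0..<2*n}"
proof (induction t arbitrary: \<sigma>)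
  case 0 then show ?case using permutes_id[of "{0..<2*n}"] by (simp add: id_def)
next
  case (Suc t)
  then obtain \<tau> R L where "\<tau> \<in> set_pmf (walk n a t)" "R \<in> set_pmf (card_pmf n a)"
    "L \<in> set_pmf (card_pmf n a)" "\<sigma> = \<tau> \<circ> Transposition.transpose R L"
    by (auto simp: step_pmf_def)
  moreover have "R < 2*n" "L < 2*n" using calculation set_card_pmf by auto
  ultimately show ?case using Suc.IH
    by (metis atLeastLessThan_iff le0 permutes_compose permutes_swap_id)
qed

definition qS :: "nat set \<Rightarrow> real" where
  "qS S = measure_pmf.prob (card_pmf n a) {x. x \<notin> S}"

lemma step2_emeasure:
  "emeasure (measure_pmf (step2 n a x)) {y. snd y \<inter> S = {}}
     = ennreal (qS S ^ 2) * indicator {y. snd y \<inter> S = {}} x"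
proof -
  have "emeasure (measure_pmf (step2 n a x)) {y. snd y \<inter> S = {}}
      = (\<integral>\<^sup>+R. emeasure (measure_pmf (card_pmf n a)) {L. insert R (insert L (snd x)) \<inter> S = {}} \<partial>card_pmf n a)"
    by (simp add: step2_def vimage_def)
  also have "\<dots> = (\<integral>\<^sup>+R. indicator {R. R \<notin> S} R * (ennreal (qS S) * indicator {y. snd y \<inter> S = {}} x) \<partial>card_pmf n a)"
  proof (rule nn_integral_cong)
    fix R
    have "{L. insert R (insert L (snd x)) \<inter> S = {}} = (if R \<notin> S \<and> snd x \<inter> S = {} then {L. L \<notin> S} else {})"
      by auto
    then show "emeasure (measure_pmf (card_pmf n a)) {L. insert R (insert L (snd x)) \<inter> S = {}}
       = indicator {R. R \<notin> S} R * (ennreal (qS S) * indicator {y. snd y \<inter> S = {}} x)"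
      by (simp add: qS_def measure_pmf.emeasure_eq_measure indicator_def)
  qed
  also have "\<dots> = ennreal (qS S) * (ennreal (qS S) * indicator {y. snd y \<inter> S = {}} x)"
    by (subst nn_integral_multc) (simp_all add: qS_def measure_pmf.emeasure_eq_measure)
  also have "\<dots> = ennreal (qS S ^ 2) * indicator {y. snd y \<inter> S = {}} x"
    by (simp add: power2_eq_square ennreal_mult' qS_def mult.assoc)
  finally show ?thesis .
qed

lemma walk2_avoid:
  "measure_pmf.prob (walk2 n a t) {y. snd y \<inter> S = {}} = qS S ^ (2*t)"
proof -
  have "emeasure (measure_pmf (walk2 n a t)) {y. snd y \<inter> S = {}} = ennreal (qS S ^ (2*t))"
  proof (induction t)
    case 0 then show ?case by simp
  next
    case (Suc t)
    have "emeasure (measure_pmf (walk2 n a (Suc t))) {y. snd y \<inter> S = {}}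
        = (\<integral>\<^sup>+x. ennreal (qS S ^ 2) * indicator {y. snd y \<inter> S = {}} x \<partial>walk2 n a t)"
      by (simp add: step2_emeasure)
    also have "\<dots> = ennreal (qS S ^ 2) * ennreal (qS S ^ (2*t))"
      using Suc by (subst nn_integral_cmult_indicator) auto
    also have "\<dots> = ennreal (qS S ^ 2 * qS S ^ (2*t))"
      by (simp add: ennreal_mult[symmetric] qS_def)
    also have "\<dots> = ennreal (qS S ^ (2 * Suc t))"
      by (simp add: power_add[symmetric])
    finally show ?case .
  qed
  then show ?thesis
    by (simp add: measure_pmf.emeasure_eq_measure qS_def)
qed

end


context
  fixes n :: nat and a :: real
  assumes a0: "0 < a" and a1: "a \<le> 1" and n1: "1 \<le> n"
begin

lemma qS_val:
  assumes "S \<subseteq> {..<n}"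
  shows "qS n a S = 1 - real (card S) * a / (2 * n)"
proof -
  have fin: "finite S" using assms finite_subset by blast
  have "measure_pmf.prob (card_pmf n a) S = (\<Sum>c\<in>S. pmf (card_pmf n a) c)"
    using fin by (simp add: measure_measure_pmf_finite)
  also have "\<dots> = (\<Sum>c\<in>S. a / (2*n))"
    using assms by (intro sum.cong) (auto simp: card_pmf_ok[OF a0 a1 n1] weight_def)
  also have "\<dots> = real (card S) * a / (2 * n)" by simp
  finally have m: "measure_pmf.prob (card_pmf n a) S = real (card S) * a / (2 * n)" .
  have "{x. x \<notin> S} = UNIV - S" by auto
  then show ?thesis
    unfolding qS_def[OF a0 a1 n1] using m measure_pmf.prob_compl[of S "card_pmf n a"] by simp
qed

definition Uf :: "((nat \<Rightarrow> nat) \<times> nat set) \<Rightarrow> real" where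
  "Uf x = real (card {c\<in>{0..<n}. c \<notin> snd x})"

lemma Uf_sum: "Uf x = (\<Sum>c<n. indicator {y. snd y \<inter> {c} = {}} x)"
proof -
  have "real (card {c\<in>{0..<n}. c \<notin> snd x}) = (\<Sum>c\<in>{c\<in>{0..<n}. c \<notin> snd x}. 1)" by simp
  also have "\<dots> = (\<Sum>c\<in>{0..<n}. if c \<notin> snd x then 1 else 0)"
    by (rule sum.inter_filter) simp
  also have "\<dots> = (\<Sum>c<n. indicator {y. snd y \<inter> {c} = {}} x)"
    by (intro sum.cong) (auto simp: indicator_def)
  finally show ?thesis unfolding Uf_def .
qed

lemma Uf_sq: "(Uf x)^2 = (\<Sum>c<n. \<Sum>d<n. indicator {y. snd y \<inter> {c,d} = {}} x)"
proof -
  have "(Uf x)^2 = (\<Sum>c<n. indicator {y. snd y \<inter> {c} = {}} x) * (\<Sum>d<n. indicator {y. snd y \<inter> {d} = {}} x)"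
    by (simp add: Uf_sum power2_eq_square)
  also have "\<dots> = (\<Sum>c<n. \<Sum>d<n. indicator {y. snd y \<inter> {c} = {}} x * indicator {y. snd y \<inter> {d} = {}} x)"
    by (simp add: sum_product)
  also have "\<dots> = (\<Sum>c<n. \<Sum>d<n. indicator {y. snd y \<inter> {c,d} = {}} x)"
    by (intro sum.cong refl) (auto simp: indicator_def)
  finally show ?thesis .
qed

abbreviation "q1 \<equiv> 1 - a / (2*n)"

lemma integrable_w2: "integrable (measure_pmf (walk2 n a t)) (f :: _ \<Rightarrow> real)"
  by (rule integrable_measure_pmf_finite[OF finite_walk2[OF a0 a1 n1]])

lemma exp_ind: "measure_pmf.expectation (walk2 n a t) (indicator {y. snd y \<inter> S = {}}) = qS n a S ^ (2*t)"
  using walk2_avoid[OF a0 a1 n1] by (simp add: measure_pmf.emeasure_eq_measure)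

lemma exp_U: "measure_pmf.expectation (walk2 n a t) Uf = n * q1 ^ (2*t)"
proof -
  have "measure_pmf.expectation (walk2 n a t) Uf
     = (\<Sum>c<n. measure_pmf.expectation (walk2 n a t) (indicator {y. snd y \<inter> {c} = {}}))"
    unfolding Uf_sum by (rule Bochner_Integration.integral_sum) (rule integrable_w2)
  also have "\<dots> = (\<Sum>c<n. q1 ^ (2*t))"
    by (intro sum.cong refl, subst exp_ind) (auto simp: qS_val)
  finally show ?thesis by simp
qed

lemma exp_U2: "measure_pmf.expectation (walk2 n a t) (\<lambda>x. (Uf x)^2) \<le> n * q1 ^ (2*t) + n^2 * q1 ^ (4*t)"
proof -
  have q2: "(1 - a/n) ^ (2*t) \<le> q1 ^ (4*t)"
  proof -
    have "(1 - a/n) ^ (2*t) \<le> (q1^2) ^ (2*t)"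
      using a0 a1 n1 by (intro power_mono) (auto simp: power2_eq_square field_simps)
    then show ?thesis by (simp add: power_mult[symmetric] mult.commute)
  qed
  have "measure_pmf.expectation (walk2 n a t) (\<lambda>x. (Uf x)^2)
     = (\<Sum>c<n. \<Sum>d<n. measure_pmf.expectation (walk2 n a t) (indicator {y. snd y \<inter> {c,d} = {}}))"
    unfolding Uf_sq
    by (subst Bochner_Integration.integral_sum, rule integrable_w2,
        intro sum.cong refl, rule Bochner_Integration.integral_sum, rule integrable_w2)
  also have "\<dots> = (\<Sum>c<n. \<Sum>d<n. qS n a {c,d} ^ (2*t))"
    by (simp only: exp_ind)
  also have "\<dots> \<le> (\<Sum>c<n. \<Sum>d<n. (if c = d then q1 ^ (2*t) else 0) + q1 ^ (4*t))"
  proof (intro sum_mono)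
    fix c d assume "c \<in> {..<n}" "d \<in> {..<n}"
    have q1p: "0 \<le> q1" using a0 a1 n1 by (simp add: field_simps)
    show "qS n a {c,d} ^ (2*t) \<le> (if c = d then q1 ^ (2*t) else 0) + q1 ^ (4*t)"
    proof (cases "c = d")
      case True
      then have "qS n a {c,d} = q1" using qS_val[of "{c}"] \<open>c \<in> _\<close> by simp
      then show ?thesis using True q1p by simp
    next
      case False
      then have "qS n a {c,d} = 1 - a/n" using qS_val[of "{c,d}"] \<open>c \<in> _\<close> \<open>d \<in> _\<close> n1 by simp
      then show ?thesis using False q2 by simp
    qed
  qed
  also have "\<dots> = n * q1 ^ (2*t) + n^2 * q1 ^ (4*t)"
    by (simp add: sum.distrib power2_eq_square algebra_simps)
  finally show ?thesis .
qed

lemma cheb: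
  assumes "K < n * q1 ^ (2*t)"
  shows "measure_pmf.prob (walk2 n a t) {x. Uf x < K} \<le> (n * q1 ^ (2*t)) / (n * q1 ^ (2*t) - K)^2"
proof -
  define \<mu> where "\<mu> = n * q1 ^ (2*t)"
  define M where "M = measure_pmf (walk2 n a t)"
  have M1: "measure M {x\<in>space M. (Uf x - \<mu>)^2 \<ge> (\<mu> - K)^2} \<le> (\<integral>x. (Uf x - \<mu>)^2 \<partial>M) / (\<mu> - K)^2"
  proof (rule integral_Markov_inequality_measure[where A=UNIV])
    show "integrable M (\<lambda>x. (Uf x - \<mu>)^2)" unfolding M_def by (rule integrable_w2)
    show "UNIV \<in> sets M" unfolding M_def by simp
    show "AE x in M. 0 \<le> (Uf x - \<mu>)^2" by simp
    show "0 < (\<mu> - K)^2" using assms by (simp add: \<mu>_def)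
  qed
  have M2: "{x. Uf x < K} \<subseteq> {x\<in>space M. (Uf x - \<mu>)^2 \<ge> (\<mu> - K)^2}"
  proof
    fix x assume "x \<in> {x. Uf x < K}"
    then have "(\<mu> - K)^2 \<le> (\<mu> - Uf x)^2"
      using assms by (intro power_mono) (auto simp: \<mu>_def)
    then show "x \<in> {x\<in>space M. (Uf x - \<mu>)^2 \<ge> (\<mu> - K)^2}"
      by (simp add: M_def power2_commute)
  qed
  have M3: "(\<integral>x. (Uf x - \<mu>)^2 \<partial>M) \<le> \<mu>"
  proof -
    have e: "(\<lambda>x. (Uf x - \<mu>)^2) = (\<lambda>x. (Uf x)^2 - 2*\<mu> * Uf x + \<mu>^2)"
      by (auto simp: power2_eq_square algebra_simps)
    have I: "\<And>f. integrable M (f :: _ \<Rightarrow> real)" unfolding M_def by (rule integrable_w2)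
    have E1: "(\<integral>x. (Uf x - \<mu>)^2 \<partial>M) = (\<integral>x. (Uf x)^2 - 2*\<mu> * Uf x \<partial>M) + (\<integral>x. \<mu>^2 \<partial>M)"
      unfolding e by (rule Bochner_Integration.integral_add[OF I I])
    have E2: "(\<integral>x. (Uf x)^2 - 2*\<mu> * Uf x \<partial>M) = (\<integral>x. (Uf x)^2 \<partial>M) - (\<integral>x. 2*\<mu> * Uf x \<partial>M)"
      by (rule Bochner_Integration.integral_diff[OF I I])
    have E3: "(\<integral>x. 2*\<mu> * Uf x \<partial>M) = 2*\<mu> * (\<integral>x. Uf x \<partial>M)"
      by (rule integral_mult_right_zero)
    have E4: "(\<integral>x. \<mu>^2 \<partial>M) = \<mu>^2"
      unfolding M_def by (simp add: measure_pmf.prob_space)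
    have E5: "(\<integral>x. Uf x \<partial>M) = \<mu>" unfolding M_def \<mu>_def by (rule exp_U)
    have E6: "(\<integral>x. (Uf x)^2 \<partial>M) \<le> \<mu> + \<mu>^2"
      using exp_U2[of t] unfolding M_def \<mu>_def
      by (simp add: power2_eq_square power_add[symmetric] mult_2 mult_ac)
    show ?thesis unfolding E1 E2 E3 E4 E5 using E6 by (simp add: power2_eq_square)
  qed
  have "measure M {x. Uf x < K} \<le> \<mu> / (\<mu> - K)^2"
  proof -
    have "measure M {x. Uf x < K} \<le> measure M {x\<in>space M. (Uf x - \<mu>)^2 \<ge> (\<mu> - K)^2}"
      using M2 unfolding M_def by (intro measure_pmf.finite_measure_mono) auto
    also have "\<dots> \<le> (\<integral>x. (Uf x - \<mu>)^2 \<partial>M) / (\<mu> - K)^2" by (rule M1)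
    also have "\<dots> \<le> \<mu> / (\<mu> - K)^2" using M3 by (intro divide_right_mono) auto
    finally show ?thesis .
  qed
  then show ?thesis by (simp add: M_def \<mu>_def)
qed

end


lemma mu_lower:
  fixes a \<epsilon> :: real and n :: nat
  assumes a0: "0 < a" and a1: "a \<le> 1" and e0: "0 < \<epsilon>" and e1: "\<epsilon> < 1" and n1: "1 \<le> n"
  shows "real (2*n) powr \<epsilon> / (2 * exp 2) \<le> real n * (1 - a/(2*n))^(2 * tN a \<epsilon> (2*n))"
proof -
  define N where "N = real (2*n)"
  define x where "x = a / (2*n)"
  define t where "t = tN a \<epsilon> (2*n)"
  define T where "T = (1 - \<epsilon>) * (1 / (2 * a)) * N * ln N"
  have N2: "2 \<le> N" using n1 by (simp add: N_def)
  have lnN: "0 \<le> ln N" using N2 by simp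
  have lnNle: "ln N \<le> N" using N2 ln_le_minus_one[of N] by simp
  have T0: "0 \<le> T" unfolding T_def using e1 a0 lnN N2 by simp
  have tle: "real t \<le> T"
  proof -
    have "real t = real (nat \<lfloor>T\<rfloor>)" unfolding t_def tN_def T_def N_def by simp
    also have "\<dots> = of_int \<lfloor>T\<rfloor>" using T0 by simp
    also have "\<dots> \<le> T" by simp
    finally show ?thesis .
  qed
  have x0: "0 < x" and xh: "x \<le> 1/2" using a0 a1 n1 by (auto simp: x_def field_simps)
  have lnq: "- x - 2 * x\<^sup>2 \<le> ln (1 - x)" by (rule ln_one_minus_pos_lower_bound) (use x0 xh in auto)
  have Tx: "2 * T * x = (1 - \<epsilon>) * ln N"
    unfolding T_def x_def N_def using a0 n1 by (simp add: field_simps)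
  have xN: "2 * x * ln N \<le> 2"
  proof -
    have "2 * x * ln N = a * (ln N / n)" unfolding x_def using n1 by (simp add: field_simps)
    also have "\<dots> \<le> 1 * (ln N / n)" using a1 lnN n1 by (intro mult_right_mono) auto
    also have "ln N / n \<le> 2" using lnNle n1 by (simp add: N_def field_simps)
    finally show ?thesis by simp
  qed
  have key: "- (1 - \<epsilon>) * ln N - 2 \<le> real (2*t) * ln (1 - x)"
  proof -
    have p: "0 \<le> x + 2 * x\<^sup>2" using x0 by simp
    have "real (2*t) * (x + 2 * x\<^sup>2) \<le> 2 * T * (x + 2 * x\<^sup>2)"
      using tle p by (intro mult_right_mono) auto
    also have "2 * T * (x + 2 * x\<^sup>2) = 2 * T * x + (2 * T * x) * (2 * x)"
      by (simp add: power2_eq_square algebra_simps)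
    also have "\<dots> = (1 - \<epsilon>) * ln N + (1 - \<epsilon>) * (2 * x * ln N)" by (simp add: Tx)
    also have "(1 - \<epsilon>) * (2 * x * ln N) \<le> 1 * 2"
      using xN e0 e1 x0 lnN by (intro mult_mono) auto
    finally have "real (2*t) * (x + 2 * x\<^sup>2) \<le> (1 - \<epsilon>) * ln N + 2" by simp
    moreover have "real (2*t) * (- x - 2 * x\<^sup>2) \<le> real (2*t) * ln (1 - x)"
      using lnq by (intro mult_left_mono) auto
    ultimately show ?thesis by (simp add: algebra_simps)
  qed
  have q0: "0 < 1 - x" using xh by simp
  have "(1 - x) ^ (2*t) = exp (real (2*t) * ln (1 - x))"
  proof -
    have "ln ((1 - x) ^ (2*t)) = real (2*t) * ln (1 - x)" by (rule ln_realpow)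
    moreover have "exp (ln ((1 - x) ^ (2*t))) = (1 - x) ^ (2*t)" using q0 by simp
    ultimately show ?thesis by metis
  qed
  also have "\<dots> \<ge> exp (- (1 - \<epsilon>) * ln N - 2)" using key by simp
  finally have b: "exp (- (1 - \<epsilon>) * ln N - 2) \<le> (1 - x) ^ (2*t)" .
  have "exp (- (1 - \<epsilon>) * ln N - 2) = N powr \<epsilon> / N / exp 2"
    using N2 by (simp add: powr_def exp_diff exp_add field_simps exp_minus)
  then have "N powr \<epsilon> / N / exp 2 \<le> (1 - x) ^ (2*t)" using b by simp
  then have "real n * (N powr \<epsilon> / N / exp 2) \<le> real n * (1 - x) ^ (2*t)"
    by (intro mult_left_mono) auto
  moreover have "real n * (N powr \<epsilon> / N / exp 2) = N powr \<epsilon> / (2 * exp 2)"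
    using n1 by (simp add: N_def field_simps)
  ultimately show ?thesis by (simp add: N_def x_def t_def)
qed



lemma measure_restrict: "set_pmf M \<subseteq> P \<Longrightarrow> measure_pmf.prob M X = measure_pmf.prob M (X \<inter> P)"
proof -
  assume s: "set_pmf M \<subseteq> P"
  have "measure_pmf.prob M X = measure_pmf.prob M (X \<inter> set_pmf M)" by (simp add: measure_Int_set_pmf)
  also have "X \<inter> set_pmf M = (X \<inter> P) \<inter> set_pmf M" using s by auto
  also have "measure_pmf.prob M \<dots> = measure_pmf.prob M (X \<inter> P)" by (simp add: measure_Int_set_pmf)
  finally show ?thesis .
qed

lemma tv_generic:
  assumes fin: "finite P" and sup: "set_pmf M \<subseteq> P" and cP: "card P > 0"
  shows "measure_pmf.prob M A - real (card (P \<inter> A)) / card P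
           \<le> (1/2) * (\<Sum>\<sigma>\<in>P. \<bar>pmf M \<sigma> - 1 / card P\<bar>)"
    and "(1/2) * (\<Sum>\<sigma>\<in>P. \<bar>pmf M \<sigma> - 1 / card P\<bar>) \<le> 1"
proof -
  define u where "u = 1 / real (card P)"
  have sP: "(\<Sum>\<sigma>\<in>P. pmf M \<sigma>) = 1"
  proof -
    have "(\<Sum>\<sigma>\<in>P. pmf M \<sigma>) = measure_pmf.prob M P" using fin by (simp add: measure_measure_pmf_finite)
    also have "\<dots> = measure_pmf.prob M UNIV" using measure_restrict[OF sup, of UNIV] by simp
    finally show ?thesis by simp
  qed
  have sPA: "(\<Sum>\<sigma>\<in>P \<inter> A. pmf M \<sigma>) = measure_pmf.prob M A"
    using fin measure_restrict[OF sup, of A] by (simp add: measure_measure_pmf_finite Int_commute)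
  have sPmA: "(\<Sum>\<sigma>\<in>P - A. pmf M \<sigma>) = 1 - measure_pmf.prob M A"
    using sum.Int_Diff[OF fin, of "pmf M" A] sP sPA by simp
  have uPA: "(\<Sum>\<sigma>\<in>P \<inter> A. u) = real (card (P \<inter> A)) / card P" by (simp add: u_def)
  have uPmA: "(\<Sum>\<sigma>\<in>P - A. u) = 1 - real (card (P \<inter> A)) / card P"
  proof -
    have "(\<Sum>\<sigma>\<in>P. u) = 1" using cP by (simp add: u_def)
    then show ?thesis using sum.Int_Diff[OF fin, of "\<lambda>_. u" A] uPA by simp
  qed
  have "(\<Sum>\<sigma>\<in>P. \<bar>pmf M \<sigma> - u\<bar>) = (\<Sum>\<sigma>\<in>P \<inter> A. \<bar>pmf M \<sigma> - u\<bar>) + (\<Sum>\<sigma>\<in>P - A. \<bar>pmf M \<sigma> - u\<bar>)"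
    by (rule sum.Int_Diff[OF fin])
  moreover have "(\<Sum>\<sigma>\<in>P \<inter> A. pmf M \<sigma> - u) \<le> (\<Sum>\<sigma>\<in>P \<inter> A. \<bar>pmf M \<sigma> - u\<bar>)"
    by (intro sum_mono) auto
  moreover have "(\<Sum>\<sigma>\<in>P - A. u - pmf M \<sigma>) \<le> (\<Sum>\<sigma>\<in>P - A. \<bar>pmf M \<sigma> - u\<bar>)"
    by (intro sum_mono) auto
  ultimately show "measure_pmf.prob M A - real (card (P \<inter> A)) / card P
           \<le> (1/2) * (\<Sum>\<sigma>\<in>P. \<bar>pmf M \<sigma> - 1 / card P\<bar>)"
    using sPA sPmA uPA uPmA unfolding u_def[symmetric]
    by (simp add: sum_subtractf)
  have "(\<Sum>\<sigma>\<in>P. \<bar>pmf M \<sigma> - u\<bar>) \<le> (\<Sum>\<sigma>\<in>P. pmf M \<sigma> + u)"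
    by (intro sum_mono) (auto simp: u_def abs_if pmf_nonneg add_increasing)
  also have "\<dots> = 2" using sP cP by (simp add: sum.distrib u_def)
  finally show "(1/2) * (\<Sum>\<sigma>\<in>P. \<bar>pmf M \<sigma> - 1 / card P\<bar>) \<le> 1" by (simp add: u_def)
qed

lemma card_perms: "card (perms N) = fact N"
  unfolding perms_def by (rule card_permutations) auto

lemma finite_perms: "finite (perms N)"
  unfolding perms_def by (rule finite_permutations) auto

lemma card_fix:
  assumes "c < N"
  shows "card {\<sigma>\<in>perms N. \<sigma> c = c} = fact (N - 1)"
proof -
  have "{\<sigma>\<in>perms N. \<sigma> c = c} = {\<sigma>. \<sigma> permutes ({0..<N} - {c})}"
  proof (intro set_eqI iffI)
    fix \<sigma> assume "\<sigma> \<in> {\<sigma>\<in>perms N. \<sigma> c = c}"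
    then show "\<sigma> \<in> {\<sigma>. \<sigma> permutes ({0..<N} - {c})}"
      by (auto simp: perms_def intro: permutes_superset)
  next
    fix \<sigma> assume "\<sigma> \<in> {\<sigma>. \<sigma> permutes ({0..<N} - {c})}"
    then show "\<sigma> \<in> {\<sigma>\<in>perms N. \<sigma> c = c}"
      by (auto simp: perms_def permutes_not_in intro: permutes_subset)
  qed
  also have "card \<dots> = fact (N - 1)"
    by (rule card_permutations) (use assms in auto)
  finally show ?thesis .
qed

lemma uniform_bound:
  assumes n1: "1 \<le> n" and K0: "0 < K"
  shows "measure_pmf.prob (pmf_of_set (perms (2*n))) (A_set n K) \<le> 1 / (2 * K)"
proof -
  define P where "P = perms (2*n)"
  have finP: "finite P" unfolding P_def by (rule finite_perms)
  have neP: "P \<noteq> {}" using finP card_perms[of "2*n"] unfolding P_def by (metis card.empty fact_nonzero)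
  define F where "F \<sigma> = real (card {c\<in>{0..<n}. \<sigma> c = c})" for \<sigma> :: "nat \<Rightarrow> nat"
  have F_sum: "F \<sigma> = (\<Sum>c<n. if \<sigma> c = c then 1 else 0)" for \<sigma>
  proof -
    have "F \<sigma> = (\<Sum>c\<in>{c\<in>{0..<n}. \<sigma> c = c}. 1)" by (simp add: F_def)
    also have "\<dots> = (\<Sum>c\<in>{0..<n}. if \<sigma> c = c then 1 else 0)" by (rule sum.inter_filter) simp
    finally show ?thesis by (simp add: lessThan_atLeast0)
  qed
  have "real (card (P \<inter> A_set n K)) * K = (\<Sum>\<sigma>\<in>P \<inter> A_set n K. K)" by simp
  also have "\<dots> \<le> (\<Sum>\<sigma>\<in>P \<inter> A_set n K. F \<sigma>)"
    by (intro sum_mono) (auto simp: A_set_def F_def)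
  also have "\<dots> \<le> (\<Sum>\<sigma>\<in>P. F \<sigma>)"
    using finP by (intro sum_mono2) (auto simp: F_def)
  also have "\<dots> = (\<Sum>c<n. \<Sum>\<sigma>\<in>P. if \<sigma> c = c then 1 else 0)"
    unfolding F_sum by (rule sum.swap)
  also have "\<dots> = (\<Sum>c<n. real (fact (2*n - 1)))"
  proof (intro sum.cong refl)
    fix c assume "c \<in> {..<n}"
    then have "c < 2*n" by simp
    have "(\<Sum>\<sigma>\<in>P. if \<sigma> c = c then 1 else 0 :: real) = (\<Sum>\<sigma>\<in>{\<sigma>\<in>P. \<sigma> c = c}. 1)"
      using finP by (rule sum.inter_filter[symmetric])
    also have "\<dots> = real (fact (2*n - 1))"
      using card_fix[OF \<open>c < 2*n\<close>] by (simp add: P_def)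
    finally show "(\<Sum>\<sigma>\<in>P. if \<sigma> c = c then 1 else 0 :: real) = real (fact (2*n - 1))" .
  qed
  also have "\<dots> = real n * fact (2*n - 1)" by simp
  finally have c1: "real (card (P \<inter> A_set n K)) * K \<le> real n * fact (2*n - 1)" .
  have fr: "(fact (2*n) :: real) = real (2*n) * fact (2*n - 1)"
    using n1 by (simp add: fact_reduce)
  have "measure_pmf.prob (pmf_of_set P) (A_set n K) = real (card (P \<inter> A_set n K)) / fact (2*n)"
    using finP neP by (simp add: measure_pmf_of_set card_perms P_def)
  also have "\<dots> \<le> 1 / (2 * K)"
    using c1 K0 n1 fr by (simp add: field_simps)
  finally show ?thesis by (simp add: P_def)
qed



lemma walk_A:
  assumes a0: "0 < a" and a1: "a \<le> 1" and n1: "1 \<le> n"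
  shows "1 - measure_pmf.prob (walk2 n a t) {x. Uf n x < K} \<le> measure_pmf.prob (walk n a t) (A_set n K)"
proof -
  define M where "M = walk2 n a t"
  have "measure_pmf.prob (walk n a t) (A_set n K) = measure_pmf.prob M (fst -` A_set n K)"
    unfolding M_def walk2_fst[symmetric] by simp
  also have "\<dots> = 1 - measure_pmf.prob M (UNIV - fst -` A_set n K)"
    using measure_pmf.prob_compl[of "fst -` A_set n K" M] by simp
  finally have eq: "measure_pmf.prob (walk n a t) (A_set n K) = 1 - measure_pmf.prob M (UNIV - fst -` A_set n K)" .
  have "measure_pmf.prob M (UNIV - fst -` A_set n K) = measure_pmf.prob M ((UNIV - fst -` A_set n K) \<inter> set_pmf M)"
    by (simp add: measure_Int_set_pmf)
  also have "\<dots> \<le> measure_pmf.prob M {x. Uf n x < K}"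
  proof (intro measure_pmf.finite_measure_mono subsetI)
    fix x assume x: "x \<in> (UNIV - fst -` A_set n K) \<inter> set_pmf M"
    have "{c\<in>{0..<n}. c \<notin> snd x} \<subseteq> {c\<in>{0..<n}. fst x c = c}"
      using walk2_inv[of x n a t] x by (auto simp: M_def)
    then have "card {c\<in>{0..<n}. c \<notin> snd x} \<le> card {c\<in>{0..<n}. fst x c = c}"
      by (intro card_mono) auto
    moreover have "\<not> K \<le> real (card {c\<in>{0..<n}. fst x c = c})" using x by (auto simp: A_set_def)
    ultimately show "x \<in> {x. Uf n x < K}" unfolding Uf_def[OF a0 a1 n1] by simp
  qed auto
  finally show ?thesis using eq by (simp add: M_def)
qed

lemma walk_bound:
  fixes a \<epsilon> :: real and n :: nat
  assumes a0: "0 < a" and a1: "a \<le> 1" and e0: "0 < \<epsilon>" and e1: "\<epsilon> < 1" and n1: "1 \<le> n"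
    and big: "4 * exp 2 \<le> real (2*n) powr (\<epsilon>/2)"
  shows "1 - 8 * exp 2 * real (2*n) powr (-\<epsilon>)
         \<le> measure_pmf.prob (walk n a (tN a \<epsilon> (2*n))) (A_set n (real (2*n) powr (\<epsilon>/2)))"
proof -
  define t where "t = tN a \<epsilon> (2*n)"
  define K where "K = real (2*n) powr (\<epsilon>/2)"
  define \<mu> where "\<mu> = real n * (1 - a/(2*n))^(2*t)"
  define L where "L = real (2*n) powr \<epsilon> / (2 * exp 2)"
  have K0: "0 < K" using n1 by (simp add: K_def)
  have KK: "real (2*n) powr \<epsilon> = K * K"
    unfolding K_def by (simp add: powr_add[symmetric])
  have Lmu: "L \<le> \<mu>" unfolding L_def \<mu>_def t_def by (rule mu_lower[OF a0 a1 e0 e1 n1])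
  have L2K: "2 * K \<le> L"
  proof -
    have KB: "4 * exp 2 \<le> K" unfolding K_def by (rule big)
    have "K * (4 * exp 2) \<le> K * K" using KB K0 by (intro mult_left_mono) auto
    then have "2 * K * (2 * exp 2) \<le> K * K" by (simp add: mult_ac)
    then show ?thesis unfolding L_def KK by (simp add: field_simps)
  qed
  have Kmu: "K < \<mu>" using L2K Lmu K0 by simp
  have c: "measure_pmf.prob (walk2 n a t) {x. Uf n x < K} \<le> \<mu> / (\<mu> - K)^2"
    unfolding \<mu>_def by (rule cheb[OF a0 a1 n1]) (use Kmu in \<open>simp add: \<mu>_def\<close>)
  have "\<mu> / (\<mu> - K)^2 \<le> \<mu> / (\<mu>/2)^2"
    using Kmu K0 L2K Lmu by (intro divide_left_mono power_mono) auto
  also have "\<dots> = 4 / \<mu>" using Kmu K0 by (simp add: power2_eq_square field_simps)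
  also have "\<dots> \<le> 4 / L" using Lmu L2K K0 by (intro divide_left_mono) auto
  also have "\<dots> = 8 * exp 2 * real (2*n) powr (-\<epsilon>)"
    unfolding L_def using n1 by (simp add: powr_minus field_simps)
  finally have "measure_pmf.prob (walk2 n a t) {x. Uf n x < K} \<le> 8 * exp 2 * real (2*n) powr (-\<epsilon>)"
    using c by linarith
  then show ?thesis using walk_A[OF a0 a1 n1, of t K] by (simp add: t_def K_def)
qed

theorem mainTheorem2:
  fixes a \<epsilon> :: real
  assumes "0 < a" "a \<le> 1" "0 < \<epsilon>" "\<epsilon> < 1"
  shows "(\<lambda>n. tv_to_uniform n a (tN a \<epsilon> (2*n))) \<longlonglongrightarrow> 1
       \<and> (\<lambda>n. measure_pmf.prob (walk n a (tN a \<epsilon> (2*n)))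
                 (A_set n (real (2*n) powr (\<epsilon>/2)))) \<longlonglongrightarrow> 1
       \<and> (\<lambda>n. measure_pmf.prob (pmf_of_set (perms (2*n)))
                 (A_set n (real (2*n) powr (\<epsilon>/2)))) \<longlonglongrightarrow> 0"
proof -
  note a0 = assms(1) and a1 = assms(2) and e0 = assms(3) and e1 = assms(4)
  define W where "W n = measure_pmf.prob (walk n a (tN a \<epsilon> (2*n))) (A_set n (real (2*n) powr (\<epsilon>/2)))" for n
  define U where "U n = measure_pmf.prob (pmf_of_set (perms (2*n))) (A_set n (real (2*n) powr (\<epsilon>/2)))" for n
  have ev1: "eventually (\<lambda>n::nat. 1 \<le> n) sequentially" by (rule eventually_ge_at_top)
  have "filterlim (\<lambda>n::nat. real (2*n) powr (\<epsilon>/2)) at_top sequentially"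
    using e0 by real_asymp
  then have ev2: "eventually (\<lambda>n::nat. 4 * exp 2 \<le> real (2*n) powr (\<epsilon>/2)) sequentially"
    by (simp add: filterlim_at_top)
  have W: "W \<longlonglongrightarrow> 1"
  proof (rule tendsto_sandwich[of "\<lambda>n. 1 - 8 * exp 2 * real (2*n) powr (-\<epsilon>)" W sequentially "\<lambda>_. 1"])
    show "eventually (\<lambda>n. 1 - 8 * exp 2 * real (2*n) powr (-\<epsilon>) \<le> W n) sequentially"
      using ev1 ev2 by eventually_elim (unfold W_def, rule walk_bound[OF a0 a1 e0 e1], auto)
    show "eventually (\<lambda>n. W n \<le> 1) sequentially" by (simp add: W_def)
    show "(\<lambda>n. 1 - 8 * exp 2 * real (2*n) powr (-\<epsilon>)) \<longlonglongrightarrow> 1" using e0 by real_asymp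
  qed simp
  have U: "U \<longlonglongrightarrow> 0"
  proof (rule tendsto_sandwich[of "\<lambda>_. 0" U sequentially "\<lambda>n. 1 / (2 * real (2*n) powr (\<epsilon>/2))"])
    show "eventually (\<lambda>n. 0 \<le> U n) sequentially" by (simp add: U_def)
    show "eventually (\<lambda>n. U n \<le> 1 / (2 * real (2*n) powr (\<epsilon>/2))) sequentially"
      using ev1 by eventually_elim (auto simp: U_def intro!: uniform_bound)
    show "(\<lambda>n. 1 / (2 * real (2*n) powr (\<epsilon>/2))) \<longlonglongrightarrow> 0" using e0 by real_asymp
  qed simp
  have TV: "(\<lambda>n. tv_to_uniform n a (tN a \<epsilon> (2*n))) \<longlonglongrightarrow> 1"
  proof (rule tendsto_sandwich[of "\<lambda>n. W n - U n" _ sequentially "\<lambda>_. 1"])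
    have b: "W n - U n \<le> tv_to_uniform n a (tN a \<epsilon> (2*n)) \<and> tv_to_uniform n a (tN a \<epsilon> (2*n)) \<le> 1"
      if n1: "1 \<le> n" for n
    proof -
      define P where "P = perms (2*n)"
      have finP: "finite P" unfolding P_def by (rule finite_perms)
      have cP: "real (card P) = fact (2*n)" unfolding P_def card_perms by simp
      have cP0: "card P > 0" unfolding P_def card_perms by simp
      have neP: "P \<noteq> {}" using cP0 by auto
      have sup: "set_pmf (walk n a (tN a \<epsilon> (2*n))) \<subseteq> P"
        using walk_perm[OF a0 a1 n1] by (auto simp: P_def perms_def)
      have Ueq: "U n = real (card (P \<inter> A_set n (real (2*n) powr (\<epsilon>/2)))) / card P"
        unfolding U_def P_def[symmetric] using finP neP by (simp add: measure_pmf_of_set)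
      show ?thesis
        using tv_generic(1)[OF finP sup cP0, of "A_set n (real (2*n) powr (\<epsilon>/2))"] tv_generic(2)[OF finP sup cP0]
        unfolding tv_to_uniform_def W_def[symmetric] P_def[symmetric] Ueq cP by simp
    qed
    show "eventually (\<lambda>n. W n - U n \<le> tv_to_uniform n a (tN a \<epsilon> (2*n))) sequentially"
      using ev1 by eventually_elim (use b in blast)
    show "eventually (\<lambda>n. tv_to_uniform n a (tN a \<epsilon> (2*n)) \<le> 1) sequentially"
      using ev1 by eventually_elim (use b in blast)
    show "(\<lambda>n. W n - U n) \<longlonglongrightarrow> 1" using tendsto_diff[OF W U] by simp
  qed simp
  show ?thesis using TV W U unfolding W_def U_def by blast
qed

end
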